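(* Let $(X,(\cdot,\cdot|\cdot))$ be a 2-inner product space over $\mathbb{K}\in\{\mathbb{R},\mathbb{C}\}$, let $n$ be a positive integer, let $z_1,\dots,z_n,z\in X$ and $\mu_1,\dots,\mu_n\in\mathbb{K}$. Define $A_1=\max_{1\le i\le n}|\mu_i|^2\sum_{i=1}^n\|z_i|z\|^2$; $A_2(\alpha)=\big(\sum_{i=1}^n|\mu_i|^{2\alpha}\big)^{1/\alpha}\big(\sum_{i=1}^n\|z_i|z\|^{2\beta}\big)^{1/\beta}$ for $\alpha>1$, $\frac1\alpha+\frac1\beta=1$; $A_3=\sum_{i=1}^n|\mu_i|^2\max_{1\le i\le n}\|z_i|z\|^2$; and $B_1=\max_{1\le i\ne j\le n}|\mu_i\mu_j|\sum_{1\le i\ne j\le n}|(z_i,z_j|z)|$; $B_2(\gamma)=\Big[\big(\sum_{i=1}^n|\mu_i|^{\gamma}\big)^2-\sum_{i=1}^n|\mu_i|^{2\gamma}\Big]^{1/\gamma}\big(\sum_{1\le i\ne j\le n}|(z_i,z_j|z)|^{\delta}\big)^{1/\delta}$ for $\gamma>1$, $\frac1\gamma+\frac1\delta=1$; $B_3=\Big[\big(\sum_{i=1}^n|\mu_i|\big)^2-\sum_{i=1}^n|\mu_i|^2\Big]\max_{1\le i\ne j\le n}|(z_i,z_j|z)|$. Then for every choice of $A\in\{A_1,A_2(\alpha),A_3\}$ and $B\in\{B_1,B_2(\gamma),B_3\}$ (with any admissible $\alpha,\gamma$), \[ \Big\|\sum_{i=1}^n\mu_iz_i\,\Big|\,z\Big\|^2\le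 A+B. \]
   Context: A 2-inner product on a linear space $X$ of dimension greater than $1$ over $\mathbb{K}$ ($\mathbb{K}=\mathbb{R}$ or $\mathbb{C}$) is a function $(\cdot,\cdot|\cdot):X\times X\times X\to\mathbb{K}$ such that for all $x,x',y,z\in X$ and $\alpha\in\mathbb{K}$: (i) $(x,x|z)\ge 0$, and $(x,x|z)=0$ iff $x$ and $z$ are linearly dependent; (ii) $(x,x|z)=(z,z|x)$; (iii) $(y,x|z)=\overline{(x,y|z)}$; (iv) $(\alpha x,y|z)=\alpha(x,y|z)$; (v) $(x+x',y|z)=(x,y|z)+(x',y|z)$. The associated 2-norm is $\|x|z\|=\sqrt{(x,x|z)}$. Sums and maxima indexed by $1\le i\ne j\le n$ run over all ordered pairs $(i,j)$ with $i,j\in\{1,\dots,n\}$, $i\ne j$. *)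

theory Defs
  imports "HOL-Analysis.Analysis"
begin

text \<open>Generic 2-inner products over a scalar field 'k (used with 'k = real, scaling (*R),
conjugation id; and 'k = complex, scaling (*C), conjugation cnj).\<close>

definition lin_dep2 :: "('k::field \<Rightarrow> 'a::ab_group_add \<Rightarrow> 'a) \<Rightarrow> 'a \<Rightarrow> 'a \<Rightarrow> bool" where
  "lin_dep2 sc x z \<longleftrightarrow> (\<exists>a b. (a \<noteq> 0 \<or> b \<noteq> 0) \<and> sc a x + sc b z = 0)"

definition two_inner_product ::
  "('k::real_normed_field \<Rightarrow> 'a::ab_group_add \<Rightarrow> 'a) \<Rightarrow> ('k \<Rightarrow> 'k) \<Rightarrow> ('a \<Rightarrow> 'a \<Rightarrow> 'a \<Rightarrow> 'k) \<Rightarrow> bool" where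
  "two_inner_product sc cj ip \<longleftrightarrow>
     (\<exists>x y. \<not> lin_dep2 sc x y) \<and>
     (\<forall>x z. ip x x z \<in> of_real ` {0..}) \<and>
     (\<forall>x z. ip x x z = 0 \<longleftrightarrow> lin_dep2 sc x z) \<and>
     (\<forall>x z. ip x x z = ip z z x) \<and>
     (\<forall>x y z. ip y x z = cj (ip x y z)) \<and>
     (\<forall>a x y z. ip (sc a x) y z = a * ip x y z) \<and>
     (\<forall>x x' y z. ip (x + x') y z = ip x y z + ip x' y z)"

text \<open>2-norm: \<open>\<parallel>x|z\<parallel> = sqrt (x,x|z)\<close>; (x,x|z) is a nonnegative real, equal to its norm.\<close>
definition twonorm :: "('a \<Rightarrow> 'a \<Rightarrow> 'a \<Rightarrow> 'k::real_normed_field) \<Rightarrow> 'a \<Rightarrow> 'a \<Rightarrow> real" where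
  "twonorm ip x z = sqrt (norm (ip x x z))"

definition offdiag :: "nat \<Rightarrow> (nat \<times> nat) set" where
  "offdiag n = {(i, j). i \<in> {1..n} \<and> j \<in> {1..n} \<and> i \<noteq> j}"

definition A1 :: "('a \<Rightarrow> 'a \<Rightarrow> 'a \<Rightarrow> 'k::real_normed_field) \<Rightarrow> nat \<Rightarrow> (nat \<Rightarrow> 'a) \<Rightarrow> 'a \<Rightarrow> (nat \<Rightarrow> 'k) \<Rightarrow> real" where
  "A1 ip n zs z \<mu> = (MAX i\<in>{1..n}. norm (\<mu> i) ^ 2) * (\<Sum>i=1..n. twonorm ip (zs i) z ^ 2)"

definition A2 :: "('a \<Rightarrow> 'a \<Rightarrow> 'a \<Rightarrow> 'k::real_normed_field) \<Rightarrow> nat \<Rightarrow> (nat \<Rightarrow> 'a) \<Rightarrow> 'a \<Rightarrow> (nat \<Rightarrow> 'k) \<Rightarrow> real \<Rightarrow> real \<Rightarrow> real" where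
  "A2 ip n zs z \<mu> \<alpha> \<beta> =
     (\<Sum>i=1..n. norm (\<mu> i) powr (2 * \<alpha>)) powr (1 / \<alpha>) *
     (\<Sum>i=1..n. twonorm ip (zs i) z powr (2 * \<beta>)) powr (1 / \<beta>)"

definition A3 :: "('a \<Rightarrow> 'a \<Rightarrow> 'a \<Rightarrow> 'k::real_normed_field) \<Rightarrow> nat \<Rightarrow> (nat \<Rightarrow> 'a) \<Rightarrow> 'a \<Rightarrow> (nat \<Rightarrow> 'k) \<Rightarrow> real" where
  "A3 ip n zs z \<mu> = (\<Sum>i=1..n. norm (\<mu> i) ^ 2) * (MAX i\<in>{1..n}. twonorm ip (zs i) z ^ 2)"

definition B1 :: "('a \<Rightarrow> 'a \<Rightarrow> 'a \<Rightarrow> 'k::real_normed_field) \<Rightarrow> nat \<Rightarrow> (nat \<Rightarrow> 'a) \<Rightarrow> 'a \<Rightarrow> (nat \<Rightarrow> 'k) \<Rightarrow> real" where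
  "B1 ip n zs z \<mu> = (MAX (i, j)\<in>offdiag n. norm (\<mu> i * \<mu> j)) *
                    (\<Sum>(i, j)\<in>offdiag n. norm (ip (zs i) (zs j) z))"

definition B2 :: "('a \<Rightarrow> 'a \<Rightarrow> 'a \<Rightarrow> 'k::real_normed_field) \<Rightarrow> nat \<Rightarrow> (nat \<Rightarrow> 'a) \<Rightarrow> 'a \<Rightarrow> (nat \<Rightarrow> 'k) \<Rightarrow> real \<Rightarrow> real \<Rightarrow> real" where
  "B2 ip n zs z \<mu> \<gamma> \<delta> =
     ((\<Sum>i=1..n. norm (\<mu> i) powr \<gamma>) ^ 2 - (\<Sum>i=1..n. norm (\<mu> i) powr (2 * \<gamma>))) powr (1 / \<gamma>) *
     (\<Sum>(i, j)\<in>offdiag n. norm (ip (zs i) (zs j) z) powr \<delta>) powr (1 / \<delta>)"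

definition B3 :: "('a \<Rightarrow> 'a \<Rightarrow> 'a \<Rightarrow> 'k::real_normed_field) \<Rightarrow> nat \<Rightarrow> (nat \<Rightarrow> 'a) \<Rightarrow> 'a \<Rightarrow> (nat \<Rightarrow> 'k) \<Rightarrow> real" where
  "B3 ip n zs z \<mu> = ((\<Sum>i=1..n. norm (\<mu> i)) ^ 2 - (\<Sum>i=1..n. norm (\<mu> i) ^ 2)) *
                    (MAX (i, j)\<in>offdiag n. norm (ip (zs i) (zs j) z))"

end

theory Submission
  imports Defs
begin

lemma finite_offdiag: "finite (offdiag n)"
  by (rule finite_subset[of _ "{1..n} \<times> {1..n}"]) (auto simp: offdiag_def)

lemma sq_powr: "(x::real) \<ge> 0 \<Longrightarrow> (x ^ 2) powr r = x powr (2 * r)"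
proof (cases "x = 0")
  case False
  assume "x \<ge> 0"
  then have "x > 0" using False by simp
  then have "x ^ 2 = x powr 2" using powr_realpow[of x 2] by simp
  then show ?thesis by (simp add: powr_powr)
qed simp

lemma powr_sq: "((x::real) powr r) ^ 2 = x powr (2 * r)"
proof -
  have "x powr (2 * r) = x powr r * x powr r" by (simp only: mult_2 powr_add)
  then show ?thesis by (simp add: power2_eq_square)
qed

lemma holder_sum:
  fixes x y :: "'i \<Rightarrow> real"
  assumes fin: "finite I" and x0: "\<And>i. i \<in> I \<Longrightarrow> x i \<ge> 0" and y0: "\<And>i. i \<in> I \<Longrightarrow> y i \<ge> 0"
    and p: "p > 1" and q: "q > 1" and pq: "1/p + 1/q = 1"
  shows "(\<Sum>i\<in>I. x i * y i) \<le> (\<Sum>i\<in>I. x i powr p) powr (1/p) * (\<Sum>i\<in>I. y i powr q) powr (1/q)"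
proof -
  define P where "P = (\<Sum>i\<in>I. x i powr p)"
  define Q where "Q = (\<Sum>i\<in>I. y i powr q)"
  have P0: "P \<ge> 0" "Q \<ge> 0" unfolding P_def Q_def by (auto intro: sum_nonneg)
  show ?thesis
  proof (cases "P = 0 \<or> Q = 0")
    case True
    then show ?thesis
    proof
      assume "P = 0"
      then have "\<forall>i\<in>I. x i powr p = 0" unfolding P_def using fin by (subst (asm) sum_nonneg_eq_0_iff) auto
      then have "\<forall>i\<in>I. x i = 0" by simp
      then show ?thesis by simp
    next
      assume "Q = 0"
      then have "\<forall>i\<in>I. y i powr q = 0" unfolding Q_def using fin by (subst (asm) sum_nonneg_eq_0_iff) auto
      then have "\<forall>i\<in>I. y i = 0" by simp
      then show ?thesis by simp
    qed
  next
    case False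
    then have Pp: "P > 0" "Q > 0" using P0 by auto
    define c where "c = P powr (1/p)"
    define d where "d = Q powr (1/q)"
    have cd: "c > 0" "d > 0" using Pp by (auto simp: c_def d_def)
    have cp: "c powr p = P" unfolding c_def using p P0 by (simp add: powr_powr)
    have dq: "d powr q = Q" unfolding d_def using q P0 by (simp add: powr_powr)
    have "(\<Sum>i\<in>I. (x i / c) * (y i / d)) \<le> (\<Sum>i\<in>I. (x i / c) powr p / p + (y i / d) powr q / q)"
      by (rule sum_mono, rule Youngs_inequality) (use p q pq x0 y0 cd in auto)
    also have "\<dots> = (\<Sum>i\<in>I. x i powr p) / (p * P) + (\<Sum>i\<in>I. y i powr q) / (q * Q)"
      by (simp add: powr_divide cp dq sum.distrib sum_divide_distrib mult.commute)
    also have "\<dots> = 1/p + 1/q" using Pp p q unfolding P_def Q_def by simp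
    finally have "(\<Sum>i\<in>I. x i * y i) / (c * d) \<le> 1"
      using pq by (simp add: sum_divide_distrib)
    then have "(\<Sum>i\<in>I. x i * y i) \<le> c * d" using cd by (simp add: divide_le_eq)
    then show ?thesis unfolding c_def d_def P_def Q_def .
  qed
qed

lemma ip_sum_left:
  fixes ip :: "'a::ab_group_add \<Rightarrow> 'a \<Rightarrow> 'a \<Rightarrow> 'k::real_normed_field"
  assumes add: "\<And>x x' y z. ip (x + x') y z = ip x y z + ip x' y z"
    and hom: "\<And>a x y z. ip (sc a x) y z = a * ip x y z"
  shows "ip (\<Sum>i\<in>I. sc (\<mu> i) (zs i)) y z = (\<Sum>i\<in>I. \<mu> i * ip (zs i) y z)"
proof -
  have z: "ip 0 y z = 0" using add[of 0 0 y z] by simp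
  show ?thesis by (induction I rule: infinite_finite_induct) (simp_all add: z add hom)
qed

lemma quad_bound:
  fixes ip :: "'a::ab_group_add \<Rightarrow> 'a \<Rightarrow> 'a \<Rightarrow> 'k::real_normed_field"
  assumes add: "\<And>x x' y z. ip (x + x') y z = ip x y z + ip x' y z"
    and hom: "\<And>a x y z. ip (sc a x) y z = a * ip x y z"
    and sym: "\<And>x y z. ip y x z = cj (ip x y z)"
    and ncj: "\<And>w. norm (cj w) = norm w"
  shows "norm (ip (\<Sum>i\<in>I. sc (\<mu> i) (zs i)) (\<Sum>i\<in>I. sc (\<mu> i) (zs i)) z)
     \<le> (\<Sum>i\<in>I. \<Sum>j\<in>I. norm (\<mu> i) * norm (\<mu> j) * norm (ip (zs i) (zs j) z))"
proof -
  let ?s = "\<Sum>i\<in>I. sc (\<mu> i) (zs i)"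
  have "norm (ip ?s ?s z) = norm (\<Sum>i\<in>I. \<mu> i * ip (zs i) ?s z)"
    by (rule arg_cong[where f=norm], rule ip_sum_left[OF add hom])
  also have "\<dots> \<le> (\<Sum>i\<in>I. norm (\<mu> i) * norm (ip (zs i) ?s z))"
    by (rule order_trans[OF norm_sum]) (simp add: norm_mult)
  also have "\<dots> \<le> (\<Sum>i\<in>I. norm (\<mu> i) * (\<Sum>j\<in>I. norm (\<mu> j) * norm (ip (zs i) (zs j) z)))"
  proof (rule sum_mono, rule mult_left_mono)
    fix i
    have "norm (ip (zs i) ?s z) = norm (ip ?s (zs i) z)" by (metis sym ncj)
    also have "\<dots> = norm (\<Sum>j\<in>I. \<mu> j * ip (zs j) (zs i) z)"
      by (rule arg_cong[where f=norm], rule ip_sum_left[OF add hom])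
    also have "\<dots> \<le> (\<Sum>j\<in>I. norm (\<mu> j) * norm (ip (zs j) (zs i) z))"
      by (rule order_trans[OF norm_sum]) (simp add: norm_mult)
    also have "\<dots> = (\<Sum>j\<in>I. norm (\<mu> j) * norm (ip (zs i) (zs j) z))"
      by (rule sum.cong) (auto, metis sym ncj)
    finally show "norm (ip (zs i) ?s z) \<le> (\<Sum>j\<in>I. norm (\<mu> j) * norm (ip (zs i) (zs j) z))" .
  qed simp
  also have "\<dots> = (\<Sum>i\<in>I. \<Sum>j\<in>I. norm (\<mu> i) * norm (\<mu> j) * norm (ip (zs i) (zs j) z))"
    by (simp add: sum_distrib_left mult.assoc)
  finally show ?thesis .
qed

lemma sum_split_offdiag:
  "(\<Sum>i=1..n. \<Sum>j=1..n. f i j) = (\<Sum>i=1..n. f i i) + (\<Sum>(i,j)\<in>offdiag n. f i j)"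
proof -
  have "(\<Sum>i=1..n. \<Sum>j=1..n. f i j) = (\<Sum>(i,j)\<in>{1..n}\<times>{1..n}. f i j)"
    by (simp add: sum.cartesian_product)
  also have "{1..n}\<times>{1..n} = (\<lambda>i. (i,i)) ` {1..n} \<union> offdiag n" by (auto simp: offdiag_def)
  also have "(\<Sum>(i,j)\<in>(\<lambda>i. (i,i)) ` {1..n} \<union> offdiag n. f i j)
      = (\<Sum>(i,j)\<in>(\<lambda>i. (i,i)) ` {1..n}. f i j) + (\<Sum>(i,j)\<in>offdiag n. f i j)"
    using finite_offdiag[of n] by (intro sum.union_disjoint) (auto simp: offdiag_def)
  also have "(\<Sum>(i,j)\<in>(\<lambda>i. (i,i)) ` {1..n}. f i j) = (\<Sum>i=1..n. f i i)"
    by (subst sum.reindex) (auto simp: inj_on_def)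
  finally show ?thesis .
qed


lemma main_generic:
  fixes ip :: "'a::ab_group_add \<Rightarrow> 'a \<Rightarrow> 'a \<Rightarrow> 'k::real_normed_field" and sc :: "'k \<Rightarrow> 'a \<Rightarrow> 'a"
  assumes add: "\<And>x x' y z. ip (x + x') y z = ip x y z + ip x' y z"
    and hom: "\<And>a x y z. ip (sc a x) y z = a * ip x y z"
    and sym: "\<And>x y z. ip y x z = cj (ip x y z)"
    and ncj: "\<And>w. norm (cj w) = norm w"
    and al: "\<alpha> > 1" and ab: "1 / \<alpha> + 1 / \<beta> = 1"
    and ga: "\<gamma> > 1" and gd: "1 / \<gamma> + 1 / \<delta> = 1"
  shows "\<forall>A \<in> {A1 ip n zs z \<mu>, A2 ip n zs z \<mu> \<alpha> \<beta>, A3 ip n zs z \<mu>}.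
        \<forall>B \<in> {B1 ip n zs z \<mu>, B2 ip n zs z \<mu> \<gamma> \<delta>, B3 ip n zs z \<mu>}.
          twonorm ip (\<Sum>i=1..n. sc (\<mu> i) (zs i)) z ^ 2 \<le> A + B"
proof -
  define a where "a i = norm (\<mu> i)" for i
  define g where "g i = norm (ip (zs i) (zs i) z)" for i
  define h where "h i j = norm (ip (zs i) (zs j) z)" for i j
  define D where "D = (\<Sum>i=1..n. a i ^ 2 * g i)"
  define Off where "Off = (\<Sum>(i,j)\<in>offdiag n. a i * a j * h i j)"
  have a0: "a i \<ge> 0" for i by (simp add: a_def)
  have g0: "g i \<ge> 0" for i by (simp add: g_def)
  have h0: "h i j \<ge> 0" for i j by (simp add: h_def)
  have tn: "twonorm ip x z ^ 2 = norm (ip x x z)" for x by (simp add: twonorm_def)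
  have tng: "twonorm ip (zs i) z ^ 2 = g i" for i by (simp add: tn g_def)
  have be: "\<beta> > 1"
  proof -
    have "1 / \<beta> = 1 - 1 / \<alpha>" using ab by simp
    moreover have "0 < 1 / \<alpha>" "1 / \<alpha> < 1" using al by auto
    ultimately have h1: "0 < 1 / \<beta>" and h2: "1 / \<beta> < 1" by auto
    from h1 have "\<beta> > 0" by (simp add: zero_less_divide_1_iff)
    with h2 show ?thesis by (simp add: field_simps)
  qed
  have de: "\<delta> > 1"
  proof -
    have "1 / \<delta> = 1 - 1 / \<gamma>" using gd by simp
    moreover have "0 < 1 / \<gamma>" "1 / \<gamma> < 1" using ga by auto
    ultimately have h1: "0 < 1 / \<delta>" and h2: "1 / \<delta> < 1" by auto
    from h1 have "\<delta> > 0" by (simp add: zero_less_divide_1_iff)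
    with h2 show ?thesis by (simp add: field_simps)
  qed
  have LHS: "twonorm ip (\<Sum>i=1..n. sc (\<mu> i) (zs i)) z ^ 2 \<le> D + Off"
  proof -
    have "twonorm ip (\<Sum>i=1..n. sc (\<mu> i) (zs i)) z ^ 2
        \<le> (\<Sum>i=1..n. \<Sum>j=1..n. a i * a j * h i j)"
      unfolding tn a_def h_def by (rule quad_bound[OF add hom sym ncj])
    also have "\<dots> = D + Off"
      unfolding sum_split_offdiag D_def Off_def by (simp add: g_def h_def power2_eq_square)
    finally show ?thesis .
  qed
  have finoff: "finite (offdiag n)" by (rule finite_offdiag)
  have offsum: "(\<Sum>(i,j)\<in>offdiag n. f i * f j) = (\<Sum>i=1..n. f i) ^ 2 - (\<Sum>i=1..n. f i ^ 2)"
    for f :: "nat \<Rightarrow> real"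
  proof -
    have "(\<Sum>i=1..n. f i) ^ 2 = (\<Sum>i=1..n. \<Sum>j=1..n. f i * f j)"
      by (simp add: power2_eq_square sum_product)
    also have "\<dots> = (\<Sum>i=1..n. f i ^ 2) + (\<Sum>(i,j)\<in>offdiag n. f i * f j)"
      using sum_split_offdiag[of "\<lambda>i j. f i * f j" n] by (simp add: power2_eq_square)
    finally show ?thesis by simp
  qed
  have DA1: "D \<le> A1 ip n zs z \<mu>"
  proof -
    define M where "M = (MAX i\<in>{1..n}. norm (\<mu> i) ^ 2)"
    have M: "a i ^ 2 \<le> M" if "i \<in> {1..n}" for i
      unfolding M_def a_def using that by (intro Max_ge) auto
    have "D \<le> (\<Sum>i=1..n. M * g i)" unfolding D_def
      by (rule sum_mono, rule mult_right_mono) (use M g0 in auto)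
    also have "\<dots> = A1 ip n zs z \<mu>" by (simp add: A1_def M_def sum_distrib_left tng)
    finally show ?thesis .
  qed
  have DA3: "D \<le> A3 ip n zs z \<mu>"
  proof -
    define M where "M = (MAX i\<in>{1..n}. twonorm ip (zs i) z ^ 2)"
    have M: "g i \<le> M" if "i \<in> {1..n}" for i
      unfolding M_def tng[symmetric] using that by (intro Max_ge) auto
    have "D \<le> (\<Sum>i=1..n. a i ^ 2 * M)" unfolding D_def
      by (rule sum_mono, rule mult_left_mono) (use M in auto)
    also have "\<dots> = A3 ip n zs z \<mu>" by (simp add: A3_def M_def sum_distrib_right a_def)
    finally show ?thesis .
  qed
  have DA2: "D \<le> A2 ip n zs z \<mu> \<alpha> \<beta>"
  proof -
    have "D \<le> (\<Sum>i=1..n. (a i ^ 2) powr \<alpha>) powr (1/\<alpha>) * (\<Sum>i=1..n. g i powr \<beta>) powr (1/\<beta>)"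
      unfolding D_def by (rule holder_sum) (use al be ab g0 in auto)
    also have "(\<Sum>i=1..n. (a i ^ 2) powr \<alpha>) = (\<Sum>i=1..n. norm (\<mu> i) powr (2 * \<alpha>))"
      by (rule sum.cong) (auto simp: sq_powr a_def)
    also have "(\<Sum>i=1..n. g i powr \<beta>) = (\<Sum>i=1..n. twonorm ip (zs i) z powr (2 * \<beta>))"
    proof (rule sum.cong)
      fix i
      have "g i powr \<beta> = (twonorm ip (zs i) z ^ 2) powr \<beta>" by (simp add: tng)
      also have "\<dots> = twonorm ip (zs i) z powr (2 * \<beta>)" by (rule sq_powr) (simp add: twonorm_def)
      finally show "g i powr \<beta> = twonorm ip (zs i) z powr (2 * \<beta>)" .
    qed simp
    finally show ?thesis by (simp add: A2_def)
  qed
  have OB1: "Off \<le> B1 ip n zs z \<mu>"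
  proof -
    define M where "M = (MAX (i, j)\<in>offdiag n. norm (\<mu> i * \<mu> j))"
    have M: "a i * a j \<le> M" if "(i, j) \<in> offdiag n" for i j
    proof -
      have "norm (\<mu> i * \<mu> j) \<le> M" unfolding M_def
        using that finoff by (intro Max_ge) auto
      then show ?thesis by (simp add: a_def norm_mult)
    qed
    have "Off \<le> (\<Sum>(i,j)\<in>offdiag n. M * h i j)" unfolding Off_def
    proof (rule sum_mono)
      fix p assume p: "p \<in> offdiag n"
      obtain i j where pij: "p = (i, j)" by (cases p)
      show "(case p of (i, j) \<Rightarrow> a i * a j * h i j) \<le> (case p of (i, j) \<Rightarrow> M * h i j)"
        using M[of i j] p h0[of i j] by (simp add: pij mult_right_mono)
    qed
    also have "\<dots> = B1 ip n zs z \<mu>"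
      by (simp add: B1_def M_def h_def sum_distrib_left case_prod_unfold)
    finally show ?thesis .
  qed
  have OB3: "Off \<le> B3 ip n zs z \<mu>"
  proof -
    define M where "M = (MAX (i, j)\<in>offdiag n. norm (ip (zs i) (zs j) z))"
    have M: "h i j \<le> M" if "(i, j) \<in> offdiag n" for i j
      unfolding M_def h_def using that finoff by (intro Max_ge) auto
    have "Off \<le> (\<Sum>(i,j)\<in>offdiag n. a i * a j * M)" unfolding Off_def
    proof (rule sum_mono)
      fix p assume p: "p \<in> offdiag n"
      obtain i j where pij: "p = (i, j)" by (cases p)
      show "(case p of (i, j) \<Rightarrow> a i * a j * h i j) \<le> (case p of (i, j) \<Rightarrow> a i * a j * M)"
        using M[of i j] p a0[of i] a0[of j] by (simp add: pij mult_left_mono)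
    qed
    also have "\<dots> = (\<Sum>(i,j)\<in>offdiag n. a i * a j) * M"
      by (simp add: sum_distrib_right case_prod_unfold)
    also have "\<dots> = B3 ip n zs z \<mu>"
      by (simp add: B3_def M_def offsum a_def)
    finally show ?thesis .
  qed
  have OB2: "Off \<le> B2 ip n zs z \<mu> \<gamma> \<delta>"
  proof -
    have "Off = (\<Sum>p\<in>offdiag n. (a (fst p) * a (snd p)) * h (fst p) (snd p))"
      by (simp add: Off_def case_prod_unfold)
    also have "\<dots> \<le> (\<Sum>p\<in>offdiag n. (a (fst p) * a (snd p)) powr \<gamma>) powr (1/\<gamma>)
                 * (\<Sum>p\<in>offdiag n. h (fst p) (snd p) powr \<delta>) powr (1/\<delta>)"
      by (rule holder_sum) (use finoff ga de gd a0 h0 in auto)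
    also have "(\<Sum>p\<in>offdiag n. (a (fst p) * a (snd p)) powr \<gamma>)
        = (\<Sum>(i,j)\<in>offdiag n. a i powr \<gamma> * a j powr \<gamma>)"
      by (simp add: case_prod_unfold powr_mult)
    also have "\<dots> = (\<Sum>i=1..n. a i powr \<gamma>) ^ 2 - (\<Sum>i=1..n. (a i powr \<gamma>) ^ 2)"
      by (rule offsum)
    also have "(\<Sum>i=1..n. (a i powr \<gamma>) ^ 2) = (\<Sum>i=1..n. a i powr (2 * \<gamma>))"
      by (rule sum.cong) (simp_all add: powr_sq)
    finally show ?thesis by (simp add: B2_def a_def h_def case_prod_unfold)
  qed
  show ?thesis
  proof (intro ballI)
    fix A B
    assume A: "A \<in> {A1 ip n zs z \<mu>, A2 ip n zs z \<mu> \<alpha> \<beta>, A3 ip n zs z \<mu>}"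
      and B: "B \<in> {B1 ip n zs z \<mu>, B2 ip n zs z \<mu> \<gamma> \<delta>, B3 ip n zs z \<mu>}"
    from A have "D \<le> A" using DA1 DA2 DA3 by blast
    moreover from B have "Off \<le> B" using OB1 OB2 OB3 by blast
    ultimately show "twonorm ip (\<Sum>i=1..n. sc (\<mu> i) (zs i)) z ^ 2 \<le> A + B"
      using LHS by linarith
  qed
qed

theorem lemma2p1:
  fixes n :: nat and \<alpha> \<beta> \<gamma> \<delta> :: real
  assumes "n \<ge> 1"
    and "\<alpha> > 1" and "1 / \<alpha> + 1 / \<beta> = 1"
    and "\<gamma> > 1" and "1 / \<gamma> + 1 / \<delta> = 1"
  shows
   "(\<forall>(ip :: 'a::real_vector \<Rightarrow> 'a \<Rightarrow> 'a \<Rightarrow> real) (zs :: nat \<Rightarrow> 'a) (z :: 'a) (\<mu> :: nat \<Rightarrow> real).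
       two_inner_product (*\<^sub>R) id ip \<longrightarrow>
       (\<forall>A \<in> {A1 ip n zs z \<mu>, A2 ip n zs z \<mu> \<alpha> \<beta>, A3 ip n zs z \<mu>}.
        \<forall>B \<in> {B1 ip n zs z \<mu>, B2 ip n zs z \<mu> \<gamma> \<delta>, B3 ip n zs z \<mu>}.
          twonorm ip (\<Sum>i=1..n. \<mu> i *\<^sub>R zs i) z ^ 2 \<le> A + B))
    \<and>
    (\<forall>(sc :: complex \<Rightarrow> 'b::ab_group_add \<Rightarrow> 'b) (ip :: 'b \<Rightarrow> 'b \<Rightarrow> 'b \<Rightarrow> complex) (zs :: nat \<Rightarrow> 'b) (z :: 'b) (\<mu> :: nat \<Rightarrow> complex).
       vector_space sc \<and> two_inner_product sc cnj ip \<longrightarrow>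
       (\<forall>A \<in> {A1 ip n zs z \<mu>, A2 ip n zs z \<mu> \<alpha> \<beta>, A3 ip n zs z \<mu>}.
        \<forall>B \<in> {B1 ip n zs z \<mu>, B2 ip n zs z \<mu> \<gamma> \<delta>, B3 ip n zs z \<mu>}.
          twonorm ip (\<Sum>i=1..n. sc (\<mu> i) (zs i)) z ^ 2 \<le> A + B))"
proof (intro conjI allI impI)
  fix ip :: "'a::real_vector \<Rightarrow> 'a \<Rightarrow> 'a \<Rightarrow> real" and zs :: "nat \<Rightarrow> 'a" and z :: 'a and \<mu> :: "nat \<Rightarrow> real"
  assume t: "two_inner_product (*\<^sub>R) id ip"
  show "\<forall>A \<in> {A1 ip n zs z \<mu>, A2 ip n zs z \<mu> \<alpha> \<beta>, A3 ip n zs z \<mu>}.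
        \<forall>B \<in> {B1 ip n zs z \<mu>, B2 ip n zs z \<mu> \<gamma> \<delta>, B3 ip n zs z \<mu>}.
          twonorm ip (\<Sum>i=1..n. \<mu> i *\<^sub>R zs i) z ^ 2 \<le> A + B"
  proof -
    have add: "\<And>x x' y z. ip (x + x') y z = ip x y z + ip x' y z"
      and hom: "\<And>a x y z. ip (a *\<^sub>R x) y z = a * ip x y z"
      and sym: "\<And>x y z. ip y x z = id (ip x y z)"
      using t unfolding two_inner_product_def by blast+
    have ncj: "\<And>w::real. norm (id w) = norm w" by simp
    show ?thesis by (rule main_generic[OF add hom sym ncj assms(2-5)])
  qed
next
  fix sc :: "complex \<Rightarrow> 'b::ab_group_add \<Rightarrow> 'b" and ip :: "'b \<Rightarrow> 'b \<Rightarrow> 'b \<Rightarrow> complex"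
    and zs :: "nat \<Rightarrow> 'b" and z :: 'b and \<mu> :: "nat \<Rightarrow> complex"
  assume t: "vector_space sc \<and> two_inner_product sc cnj ip"
  show "\<forall>A \<in> {A1 ip n zs z \<mu>, A2 ip n zs z \<mu> \<alpha> \<beta>, A3 ip n zs z \<mu>}.
        \<forall>B \<in> {B1 ip n zs z \<mu>, B2 ip n zs z \<mu> \<gamma> \<delta>, B3 ip n zs z \<mu>}.
          twonorm ip (\<Sum>i=1..n. sc (\<mu> i) (zs i)) z ^ 2 \<le> A + B"
  proof -
    have add: "\<And>x x' y z. ip (x + x') y z = ip x y z + ip x' y z"
      and hom: "\<And>a x y z. ip (sc a x) y z = a * ip x y z"
      and sym: "\<And>x y z. ip y x z = cnj (ip x y z)"
      using t unfolding two_inner_product_def by blast+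
    have ncj: "\<And>w::complex. norm (cnj w) = norm w" by simp
    show ?thesis by (rule main_generic[OF add hom sym ncj assms(2-5)])
  qed
qed

end
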